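(* Let $H\in\mathbb{R}^{n\times n}$ and $M\in\mathbb{R}^{m\times m}$ be symmetric positive semidefinite and $A\in\mathbb{R}^{m\times n}$. Let $l\neq k$ be indices and $\mathcal{B}\subseteq\{1,\dots,n\}\setminus\{l,k\}$. Assume that the linear system in the unknowns $(\Delta x_l,\Delta x_k,\Delta x_{\mathcal{B}},\Delta y,\Delta z_l)$ \[ \begin{aligned} h_{ll}\Delta x_l+h_{kl}\Delta x_k+h_{\mathcal{B}l}^T\Delta x_{\mathcal{B}}-a_l^T\Delta y-\Delta z_l&=0,\\ h_{kl}\Delta x_l+h_{kk}\Delta x_k+h_{\mathcal{B}k}^T\Delta x_{\mathcal{B}}-a_k^T\Delta y&=0,\\ h_{\mathcal{B}l}\Delta x_l+h_{\mathcal{B}k}\Delta x_k+H_{\mathcal{B}\mathcal{B}}\Delta x_{\mathcal{B}}-A_{\mathcal{B}}^T\Delta y&=0,\\ a_l\Delta x_l+a_k\Delta x_k+A_{\mathcal{B}}\Delta x_{\mathcal{B}}+M\Delta y&=0,\\ \Delta x_l+\Delta z_l&=1 \end{aligned} \] has a unique solution, and that in it $\Delta x_k\neq 0$. Then the matrices \[ K_l=\begin{pmatrix}h_{ll}&h_{\mathcal{B}l}^T&a_l^T\\ h_{\mathcal{B}l}&H_{\mathcal{B}\mathcal{B}}&A_{\mathcal{B}}^T\\ a_l&A_{\mathcal{B}}&-M\end{pmatrix}\quad\text{and}\quad K_k=\begin{pmatrix}h_{kk}&h_{\mathcal{B}k}^T&a_k^T\\ h_{\mathcal{B}k}&H_{\mathcal{B}\mathcal{B}}&A_{\mathcal{B}}^T\\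 a_k&A_{\mathcal{B}}&-M\end{pmatrix} \] are nonsingular.
   Context: $h_{ij}$ denotes the $(i,j)$ entry of $H$; $h_{\mathcal{B}j}$ the column vector $(h_{ij})_{i\in\mathcal{B}}$; $H_{\mathcal{B}\mathcal{B}}$ the principal submatrix of $H$ with rows and columns in $\mathcal{B}$; $a_j$ the $j$th column of $A$; $A_{\mathcal{B}}$ the matrix of columns of $A$ indexed by $\mathcal{B}$. *)

theory Defs
  imports "Jordan_Normal_Form.Determinant"
begin

text \<open>Indices are 0-based: \<open>{0..<n}\<close> plays the role of \<open>{1,...,n}\<close>.
  The index set B is enumerated increasingly by \<open>sorted_list_of_set B\<close>; a vector
  \<open>\<Delta>x_B\<close> is a vector of dimension \<open>card B\<close> whose p-th entry is the
  component for index \<open>sorted_list_of_set B ! p\<close>.\<close>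

definition psd_mat :: "real mat \<Rightarrow> bool" where
  "psd_mat H \<longleftrightarrow> (\<forall>v \<in> carrier_vec (dim_row H). 0 \<le> scalar_prod v (H *\<^sub>v v))"

text \<open>The matrix K_j = [[h_jj, h_Bj^T, a_j^T],[h_Bj, H_BB, A_B^T],[a_j, A_B, -M]],
  i.e. rows/columns 0..card B correspond to the indices j, b_1, ..., b_c of H,
  the remaining m rows/columns to the rows of A.\<close>
definition kkt_mat :: "real mat \<Rightarrow> real mat \<Rightarrow> real mat \<Rightarrow> nat \<Rightarrow> nat set \<Rightarrow> real mat" where
  "kkt_mat H A M j B =
    (let bs = sorted_list_of_set B; c = card B; m = dim_row A;
         idx = (\<lambda>r. if r = 0 then j else bs ! (r - 1))
     in mat (1 + c + m) (1 + c + m) (\<lambda>(r, s).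
          if r \<le> c \<and> s \<le> c then H $$ (idx r, idx s)
          else if r \<le> c then A $$ (s - 1 - c, idx r)
          else if s \<le> c then A $$ (r - 1 - c, idx s)
          else - (M $$ (r - 1 - c, s - 1 - c))))"

definition step_system ::
  "real mat \<Rightarrow> real mat \<Rightarrow> real mat \<Rightarrow> nat \<Rightarrow> nat \<Rightarrow> nat set \<Rightarrow>
   real \<Rightarrow> real \<Rightarrow> real vec \<Rightarrow> real vec \<Rightarrow> real \<Rightarrow> bool" where
  "step_system H A M l k B dxl dxk dxB dy dzl \<longleftrightarrow>
    (let bs = sorted_list_of_set B; m = dim_row A in
      dxB \<in> carrier_vec (card B) \<and> dy \<in> carrier_vec m \<and>
      H $$ (l, l) * dxl + H $$ (k, l) * dxk + (\<Sum>p<card B. H $$ (bs ! p, l) * dxB $ p)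
        - (\<Sum>i<m. A $$ (i, l) * dy $ i) - dzl = 0 \<and>
      H $$ (k, l) * dxl + H $$ (k, k) * dxk + (\<Sum>p<card B. H $$ (bs ! p, k) * dxB $ p)
        - (\<Sum>i<m. A $$ (i, k) * dy $ i) = 0 \<and>
      (\<forall>q<card B. H $$ (bs ! q, l) * dxl + H $$ (bs ! q, k) * dxk
        + (\<Sum>p<card B. H $$ (bs ! q, bs ! p) * dxB $ p)
        - (\<Sum>i<m. A $$ (i, bs ! q) * dy $ i) = 0) \<and>
      (\<forall>i<m. A $$ (i, l) * dxl + A $$ (i, k) * dxk
        + (\<Sum>p<card B. A $$ (i, bs ! p) * dxB $ p)
        + (\<Sum>j<m. M $$ (i, j) * dy $ j) = 0) \<and>
      dxl + dzl = 1)"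

end

theory Submission
  imports Defs
begin

lemma quad_zero:
  fixes a b :: real
  assumes "b \<ge> 0" and "\<And>t. 0 \<le> 2*t*a + t*t*b"
  shows "a = 0"
proof -
  define s where "s = -a/(b+1)"
  have h: "s*(b+1) = -a" unfolding s_def using assms(1) by simp
  have "(2*s*a + s*s*b)*((b+1)*(b+1)) = 2*a*(s*(b+1))*(b+1) + (s*(b+1))*(s*(b+1))*b"
    by (simp add: algebra_simps)
  also have "\<dots> = -(a*a)*(b+2)" unfolding h by (simp add: algebra_simps)
  finally have e: "(2*s*a + s*s*b)*((b+1)*(b+1)) = -(a*a)*(b+2)" .
  have "0 \<le> (2*s*a + s*s*b)*((b+1)*(b+1))" using assms by simp
  hence "0 \<le> -(a*a)*(b+2)" using e by simp
  hence "a*a*(b+2) \<le> 0" by simp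
  hence "a*a = 0" using assms(1) by (smt (verit) mult_pos_pos zero_le_square)
  thus ?thesis by simp
qed

lemma psd_null:
  fixes H :: "real mat"
  assumes H: "H \<in> carrier_mat n n" and sym: "transpose_mat H = H" and psd: "psd_mat H"
    and x: "x \<in> carrier_vec n" and z: "x \<bullet> (H *\<^sub>v x) = 0"
  shows "H *\<^sub>v x = 0\<^sub>v n"
proof -
  have symm: "x \<bullet> (H *\<^sub>v d) = d \<bullet> (H *\<^sub>v x)" if d: "d \<in> carrier_vec n" for d
  proof -
    have "(transpose_mat H *\<^sub>v d) \<bullet> x = d \<bullet> (H *\<^sub>v x)"
      by (rule transpose_vec_mult_scalar[OF H x d])
    hence "(H *\<^sub>v d) \<bullet> x = d \<bullet> (H *\<^sub>v x)" using sym by simp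
    thus ?thesis using comm_scalar_prod[of x n "H *\<^sub>v d"] H x d by simp
  qed
  have orth: "d \<bullet> (H *\<^sub>v x) = 0" if d: "d \<in> carrier_vec n" for d
  proof (rule quad_zero)
    show "0 \<le> d \<bullet> (H *\<^sub>v d)" using psd d H unfolding psd_mat_def by auto
    fix t :: real
    have "0 \<le> (x + t \<cdot>\<^sub>v d) \<bullet> (H *\<^sub>v (x + t \<cdot>\<^sub>v d))" using psd d H x unfolding psd_mat_def by auto
    also have "H *\<^sub>v (x + t \<cdot>\<^sub>v d) = H *\<^sub>v x + t \<cdot>\<^sub>v (H *\<^sub>v d)"
      using H x d by (simp add: mult_add_distrib_mat_vec[OF H] mult_mat_vec[OF H])
    also have "(x + t \<cdot>\<^sub>v d) \<bullet> (H *\<^sub>v x + t \<cdot>\<^sub>v (H *\<^sub>v d))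
      = x \<bullet> (H *\<^sub>v x) + t * (x \<bullet> (H *\<^sub>v d)) + t * (d \<bullet> (H *\<^sub>v x)) + t*t*(d \<bullet> (H *\<^sub>v d))"
      using H x d
      by (simp add: add_scalar_prod_distrib[of _ n] scalar_prod_add_distrib[of _ n] algebra_simps)
    finally show "0 \<le> 2*t*(d \<bullet> (H *\<^sub>v x)) + t*t*(d \<bullet> (H *\<^sub>v d))"
      using z symm[OF d] by simp
  qed
  show ?thesis
  proof (rule eq_vecI)
    show "dim_vec (H *\<^sub>v x) = dim_vec (0\<^sub>v n)" using H by simp
    fix i assume "i < dim_vec (0\<^sub>v n)"
    hence i: "i < n" by simp
    have "unit_vec n i \<bullet> (H *\<^sub>v x) = 0" by (rule orth) simp
    moreover have "unit_vec n i \<bullet> (H *\<^sub>v x) = (H *\<^sub>v x) $ i"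
      by (rule scalar_prod_left_unit) (use H x i in auto)
    ultimately show "(H *\<^sub>v x) $ i = 0\<^sub>v n $ i" using i by simp
  qed
qed


lemma sum_split3:
  fixes f :: "nat \<Rightarrow> real"
  shows "(\<Sum>s<Suc (c+m). f s) = f 0 + (\<Sum>p<c. f (Suc p)) + (\<Sum>i<m. f (Suc (c+i)))"
proof -
  have "(\<Sum>s<c+m. g s) = (\<Sum>p<c. g p) + (\<Sum>i<m. g (c+i))" for g :: "nat \<Rightarrow> real"
    by (induction m) auto
  note h = this
  have "(\<Sum>s<Suc (c+m). f s) = f 0 + (\<Sum>s<c+m. f (Suc s))" by (rule sum.lessThan_Suc_shift)
  also have "(\<Sum>s<c+m. f (Suc s)) = (\<Sum>p<c. f (Suc p)) + (\<Sum>i<m. f (Suc (c+i)))" by (rule h)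
  finally show ?thesis by simp
qed

lemma kkt_entry:
  assumes "r < 1 + card B + dim_row A" "s < 1 + card B + dim_row A"
  shows "kkt_mat H A M j B $$ (r,s) =
    (let bs = sorted_list_of_set B; c = card B;
         idx = (\<lambda>r. if r = 0 then j else bs ! (r - 1))
     in if r \<le> c \<and> s \<le> c then H $$ (idx r, idx s)
          else if r \<le> c then A $$ (s - 1 - c, idx r)
          else if s \<le> c then A $$ (r - 1 - c, idx s)
          else - (M $$ (r - 1 - c, s - 1 - c)))"
  using assms unfolding kkt_mat_def Let_def by simp

lemma kkt_dims: "kkt_mat H A M j B \<in> carrier_mat (1 + card B + dim_row A) (1 + card B + dim_row A)"
  unfolding kkt_mat_def Let_def by simp

lemma kkt_mulvec:
  assumes v: "v \<in> carrier_vec (1 + card B + dim_row A)" and r: "r < 1 + card B + dim_row A"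
  shows "(kkt_mat H A M j B *\<^sub>v v) $ r = (\<Sum>s<Suc (card B + dim_row A). kkt_mat H A M j B $$ (r,s) * v $ s)"
proof -
  have K: "kkt_mat H A M j B \<in> carrier_mat (1 + card B + dim_row A) (1 + card B + dim_row A)"
    by (rule kkt_dims)
  show ?thesis using K v r
    by (simp add: scalar_prod_def atLeast0LessThan)
qed

lemma kkt_rows:
  assumes v: "v \<in> carrier_vec (1 + card B + m)" and m: "dim_row A = m"
    and bs: "bs = sorted_list_of_set B" and c: "c = card B"
  shows "(kkt_mat H A M j B *\<^sub>v v) $ 0 = H $$ (j,j) * v$0 + (\<Sum>p<c. H $$ (j, bs!p) * v$(Suc p))
            + (\<Sum>i<m. A $$ (i,j) * v$(Suc (c+i)))"
   and "q < c \<Longrightarrow> (kkt_mat H A M j B *\<^sub>v v) $ Suc q = H $$ (bs!q,j) * v$0 + (\<Sum>p<c. H $$ (bs!q, bs!p) * v$(Suc p))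
            + (\<Sum>i<m. A $$ (i,bs!q) * v$(Suc (c+i)))"
   and "i < m \<Longrightarrow> (kkt_mat H A M j B *\<^sub>v v) $ Suc (c+i) = A $$ (i,j) * v$0 + (\<Sum>p<c. A $$ (i, bs!p) * v$(Suc p))
            - (\<Sum>i'<m. M $$ (i,i') * v$(Suc (c+i')))"
proof -
  let ?K = "kkt_mat H A M j B"
  have mv: "(?K *\<^sub>v v) $ r = ?K $$ (r,0) * v$0 + (\<Sum>p<c. ?K $$ (r, Suc p) * v$(Suc p))
            + (\<Sum>i<m. ?K $$ (r, Suc (c+i)) * v$(Suc (c+i)))" if "r < 1 + c + m" for r
    using kkt_mulvec[of v B A r H M j] v that m c sum_split3 by simp
  show "(?K *\<^sub>v v) $ 0 = H $$ (j,j) * v$0 + (\<Sum>p<c. H $$ (j, bs!p) * v$(Suc p))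
            + (\<Sum>i<m. A $$ (i,j) * v$(Suc (c+i)))"
    unfolding mv[of 0, simplified]
    by (intro arg_cong2[where f="(+)"] sum.cong refl)
       (simp_all add: kkt_entry m c bs Let_def)
  show "(?K *\<^sub>v v) $ Suc q = H $$ (bs!q,j) * v$0 + (\<Sum>p<c. H $$ (bs!q, bs!p) * v$(Suc p))
            + (\<Sum>i<m. A $$ (i,bs!q) * v$(Suc (c+i)))" if q: "q < c"
  proof -
    have qb: "Suc q < 1 + c + m" using q by simp
    show ?thesis
    unfolding mv[OF qb] using q
    by (intro arg_cong2[where f="(+)"] sum.cong refl)
       (simp_all add: kkt_entry m c bs Let_def)
  qed
  show "(?K *\<^sub>v v) $ Suc (c+i) = A $$ (i,j) * v$0 + (\<Sum>p<c. A $$ (i, bs!p) * v$(Suc p))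
            - (\<Sum>i'<m. M $$ (i,i') * v$(Suc (c+i')))" if i: "i < m"
  proof -
    have ib: "Suc (c+i) < 1 + c + m" using i by simp
    have "(?K *\<^sub>v v) $ Suc (c+i) = A $$ (i,j) * v$0 + (\<Sum>p<c. A $$ (i, bs!p) * v$(Suc p))
            + (\<Sum>i'<m. (- M $$ (i,i')) * v$(Suc (c+i')))"
      unfolding mv[OF ib] using i
      by (intro arg_cong2[where f="(+)"] sum.cong refl)
         (simp_all add: kkt_entry m c bs Let_def)
    thus ?thesis by (simp add: sum_negf)
  qed
qed


lemma lin_sum:
  fixes f :: "nat \<Rightarrow> real" and w :: "nat \<Rightarrow> real"
  assumes j: "j < n" and g: "\<forall>p<c. g p < n"
  shows "(\<Sum>t<n. f t * ((if t = j then u else 0) + (\<Sum>p<c. if g p = t then w p else 0)))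
        = f j * u + (\<Sum>p<c. f (g p) * w p)"
proof -
  have "(\<Sum>t<n. f t * ((if t = j then u else 0) + (\<Sum>p<c. if g p = t then w p else 0)))
     = (\<Sum>t<n. (if t = j then f t * u else 0)) + (\<Sum>t<n. \<Sum>p<c. if g p = t then f t * w p else 0)"
  proof -
    have a: "(\<Sum>t<n. f t * (if t = j then u else 0)) = (\<Sum>t<n. (if t = j then f t * u else 0))"
      by (intro sum.cong refl) simp
    have b: "(\<Sum>t<n. f t * (\<Sum>p<c. if g p = t then w p else 0)) = (\<Sum>t<n. \<Sum>p<c. if g p = t then f t * w p else 0)"
      by (auto simp: sum_distrib_left intro!: sum.cong)
    show ?thesis unfolding a[symmetric] b[symmetric] by (simp add: distrib_left sum.distrib)
  qed
  also have "(\<Sum>t<n. \<Sum>p<c. if g p = t then f t * w p else 0) = (\<Sum>p<c. \<Sum>t<n. if g p = t then f t * w p else 0)"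
    by (rule sum.swap)
  also have "\<dots> = (\<Sum>p<c. f (g p) * w p)"
    using g by (intro sum.cong refl) (simp add: sum.delta)
  finally show ?thesis using j by simp
qed

lemma kernel_facts:
  fixes H M A :: "real mat"
  assumes H: "H \<in> carrier_mat n n" and Hs: "transpose_mat H = H" and Hp: "psd_mat H"
    and M: "M \<in> carrier_mat m m" and Ms: "transpose_mat M = M" and Mp: "psd_mat M"
    and A: "A \<in> carrier_mat m n" and j: "j < n" and B: "B \<subseteq> {0..<n}"
    and bs: "bs = sorted_list_of_set B" and c: "c = card B"
    and v: "v \<in> carrier_vec (1 + c + m)"
    and ker: "kkt_mat H A M j B *\<^sub>v v = 0\<^sub>v (1 + c + m)"
  shows "\<forall>r<n. H$$(r,j) * v$0 + (\<Sum>p<c. H$$(r,bs!p) * v$(Suc p)) = 0"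
    and "\<forall>i<m. A$$(i,j) * v$0 + (\<Sum>p<c. A$$(i,bs!p) * v$(Suc p)) = 0"
    and "\<forall>i<m. (\<Sum>i'<m. M$$(i,i') * v$(Suc (c+i'))) = 0"
    and "(\<Sum>i<m. A$$(i,j) * v$(Suc (c+i))) = 0"
    and "\<forall>q<c. (\<Sum>i<m. A$$(i,bs!q) * v$(Suc (c+i))) = 0"
proof -
  have fin: "finite B" using B finite_subset by blast
  have len: "length bs = c" using bs c fin by simp
  have bsB: "bs!p \<in> B" if "p < c" for p using that len bs fin
    by (metis nth_mem set_sorted_list_of_set)
  have bsn: "\<forall>p<c. bs!p < n"
  proof (intro allI impI)
    fix p assume "p < c"
    thus "bs!p < n" using bsB[of p] B by auto
  qed
  have mA: "dim_row A = m" using A by simp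
  have v': "v \<in> carrier_vec (1 + card B + m)" using v c by simp
  define u where "u = v$0"
  define w where "w p = v$(Suc p)" for p
  define y where "y i = v$(Suc (c+i))" for i
  define hx where "hx r = H$$(r,j) * u + (\<Sum>p<c. H$$(r,bs!p) * w p)" for r
  define ax where "ax i = A$$(i,j) * u + (\<Sum>p<c. A$$(i,bs!p) * w p)" for i
  define my where "my i = (\<Sum>i'<m. M$$(i,i') * y i')" for i
  define xb where "xb t = (if t = j then u else 0) + (\<Sum>p<c. if bs!p = t then w p else 0)" for t
  define X where "X = vec n xb"
  define Y where "Y = vec m y"
  have X: "X \<in> carrier_vec n" and Y: "Y \<in> carrier_vec m" unfolding X_def Y_def by auto
  have R0: "hx j + (\<Sum>i<m. A $$ (i,j) * y i) = 0"
    using kkt_rows(1)[OF v' mA bs c, of H M j] ker unfolding hx_def u_def w_def y_def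
    by (simp add: algebra_simps)
  have Rq: "hx (bs!q) + (\<Sum>i<m. A $$ (i,bs!q) * y i) = 0" if q: "q < c" for q
  proof -
    have "(kkt_mat H A M j B *\<^sub>v v) $ Suc q = 0" using ker q by simp
    thus ?thesis using kkt_rows(2)[OF v' mA bs c q, of H M j] unfolding hx_def u_def w_def y_def
      by (simp add: algebra_simps)
  qed
  have Ri: "ax i - my i = 0" if i: "i < m" for i
  proof -
    have "(kkt_mat H A M j B *\<^sub>v v) $ Suc (c+i) = 0" using ker i by simp
    thus ?thesis using kkt_rows(3)[OF v' mA bs c i, of H M j] unfolding ax_def my_def u_def w_def y_def
      by (simp add: algebra_simps)
  qed
  have HX: "(H *\<^sub>v X) $ r = hx r" if r: "r < n" for r
  proof -
    have "(H *\<^sub>v X) $ r = (\<Sum>t<n. H$$(r,t) * xb t)"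
      using H r X unfolding X_def by (simp add: scalar_prod_def atLeast0LessThan)
    also have "\<dots> = hx r" unfolding xb_def hx_def by (rule lin_sum[OF j bsn])
    finally show ?thesis .
  qed
  have AX: "(A *\<^sub>v X) $ i = ax i" if i: "i < m" for i
  proof -
    have "(A *\<^sub>v X) $ i = (\<Sum>t<n. A$$(i,t) * xb t)"
      using A i X unfolding X_def by (simp add: scalar_prod_def atLeast0LessThan)
    also have "\<dots> = ax i" unfolding xb_def ax_def by (rule lin_sum[OF j bsn])
    finally show ?thesis .
  qed
  have MY: "(M *\<^sub>v Y) $ i = my i" if i: "i < m" for i
    using M i Y unfolding Y_def my_def by (simp add: scalar_prod_def atLeast0LessThan)
  have "X \<bullet> (H *\<^sub>v X) = (\<Sum>t<n. hx t * xb t)"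
    using H X HX unfolding scalar_prod_def
    by (simp add: atLeast0LessThan X_def mult.commute)
  also have "\<dots> = hx j * u + (\<Sum>p<c. hx (bs!p) * w p)" unfolding xb_def by (rule lin_sum[OF j bsn])
  also have "\<dots> = - ((\<Sum>i<m. A $$ (i,j) * y i) * u + (\<Sum>p<c. (\<Sum>i<m. A $$ (i,bs!p) * y i) * w p))"
  proof -
    have e1: "hx j = - (\<Sum>i<m. A $$ (i,j) * y i)" using R0 by linarith
    have e2: "(\<Sum>p<c. hx (bs!p) * w p) = (\<Sum>p<c. - ((\<Sum>i<m. A $$ (i,bs!p) * y i) * w p))"
    proof (intro sum.cong refl)
      fix p assume "p \<in> {..<c}"
      hence "hx (bs!p) = - (\<Sum>i<m. A $$ (i,bs!p) * y i)" using Rq[of p] by simp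
      thus "hx (bs!p) * w p = - ((\<Sum>i<m. A $$ (i,bs!p) * y i) * w p)" by simp
    qed
    show ?thesis unfolding e1 e2 sum_negf by simp
  qed
  also have "(\<Sum>i<m. A $$ (i,j) * y i) * u + (\<Sum>p<c. (\<Sum>i<m. A $$ (i,bs!p) * y i) * w p)
      = (\<Sum>i<m. y i * ax i)"
  proof -
    have "(\<Sum>p<c. (\<Sum>i<m. A $$ (i,bs!p) * y i) * w p) = (\<Sum>p<c. \<Sum>i<m. y i * (A $$ (i,bs!p) * w p))"
      by (intro sum.cong refl) (simp add: sum_distrib_right sum_distrib_left mult.commute mult.left_commute)
    also have "\<dots> = (\<Sum>i<m. \<Sum>p<c. y i * (A $$ (i,bs!p) * w p))" by (rule sum.swap)
    finally show ?thesis unfolding ax_def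
      by (simp add: sum_distrib_right sum_distrib_left distrib_left sum.distrib algebra_simps)
  qed
  also have "(\<Sum>i<m. y i * ax i) = (\<Sum>i<m. y i * my i)"
    using Ri by (intro sum.cong refl) simp
  also have "(\<Sum>i<m. y i * my i) = Y \<bullet> (M *\<^sub>v Y)"
    using M Y MY unfolding scalar_prod_def by (simp add: atLeast0LessThan Y_def)
  finally have eq: "X \<bullet> (H *\<^sub>v X) + Y \<bullet> (M *\<^sub>v Y) = 0" by simp
  have "X \<bullet> (H *\<^sub>v X) \<ge> 0" using Hp X H unfolding psd_mat_def by auto
  moreover have "Y \<bullet> (M *\<^sub>v Y) \<ge> 0" using Mp Y M unfolding psd_mat_def by auto
  ultimately have z1: "X \<bullet> (H *\<^sub>v X) = 0" and z2: "Y \<bullet> (M *\<^sub>v Y) = 0" using eq by linarith+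
  have HX0: "H *\<^sub>v X = 0\<^sub>v n" by (rule psd_null[OF H Hs Hp X z1])
  have MY0: "M *\<^sub>v Y = 0\<^sub>v m" by (rule psd_null[OF M Ms Mp Y z2])
  have hx0: "hx r = 0" if "r < n" for r using HX[OF that] HX0 that by simp
  have my0: "my i = 0" if "i < m" for i using MY[OF that] MY0 that by simp
  show "\<forall>r<n. H$$(r,j) * v$0 + (\<Sum>p<c. H$$(r,bs!p) * v$(Suc p)) = 0"
    using hx0 unfolding hx_def u_def w_def by simp
  show "\<forall>i<m. A$$(i,j) * v$0 + (\<Sum>p<c. A$$(i,bs!p) * v$(Suc p)) = 0"
    using Ri my0 unfolding ax_def u_def w_def by simp
  show "\<forall>i<m. (\<Sum>i'<m. M$$(i,i') * v$(Suc (c+i'))) = 0"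
    using my0 unfolding my_def y_def by simp
  show "(\<Sum>i<m. A$$(i,j) * v$(Suc (c+i))) = 0"
    using R0 hx0[OF j] unfolding y_def by simp
  show "\<forall>q<c. (\<Sum>i<m. A$$(i,bs!q) * v$(Suc (c+i))) = 0"
    using Rq hx0 bsn unfolding y_def by simp
qed


definition gen_sys ::
  "real mat \<Rightarrow> real mat \<Rightarrow> real mat \<Rightarrow> nat \<Rightarrow> nat \<Rightarrow> nat set \<Rightarrow>
   real \<Rightarrow> real \<Rightarrow> real vec \<Rightarrow> real vec \<Rightarrow> real \<Rightarrow> real \<Rightarrow> bool" where
  "gen_sys H A M l k B dxl dxk dxB dy dzl \<rho> \<longleftrightarrow>
    (let bs = sorted_list_of_set B; m = dim_row A in
      dxB \<in> carrier_vec (card B) \<and> dy \<in> carrier_vec m \<and>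
      H $$ (l, l) * dxl + H $$ (k, l) * dxk + (\<Sum>p<card B. H $$ (bs ! p, l) * dxB $ p)
        - (\<Sum>i<m. A $$ (i, l) * dy $ i) - dzl = 0 \<and>
      H $$ (k, l) * dxl + H $$ (k, k) * dxk + (\<Sum>p<card B. H $$ (bs ! p, k) * dxB $ p)
        - (\<Sum>i<m. A $$ (i, k) * dy $ i) = 0 \<and>
      (\<forall>q<card B. H $$ (bs ! q, l) * dxl + H $$ (bs ! q, k) * dxk
        + (\<Sum>p<card B. H $$ (bs ! q, bs ! p) * dxB $ p)
        - (\<Sum>i<m. A $$ (i, bs ! q) * dy $ i) = 0) \<and>
      (\<forall>i<m. A $$ (i, l) * dxl + A $$ (i, k) * dxk
        + (\<Sum>p<card B. A $$ (i, bs ! p) * dxB $ p)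
        + (\<Sum>j<m. M $$ (i, j) * dy $ j) = 0) \<and>
      dxl + dzl = \<rho>)"

lemma step_gen: "step_system H A M l k B dxl dxk dxB dy dzl = gen_sys H A M l k B dxl dxk dxB dy dzl 1"
  unfolding step_system_def gen_sys_def by simp

lemma sum_vadd: "a \<in> carrier_vec c \<Longrightarrow> b \<in> carrier_vec c \<Longrightarrow>
  (\<Sum>p<c. f p * (a + b) $ p) = (\<Sum>p<c. f p * a $ p) + (\<Sum>p<c. f p * (b::real vec) $ p)"
  by (simp add: sum.distrib[symmetric] distrib_left)

lemma sum_vsmult: "a \<in> carrier_vec c \<Longrightarrow>
  (\<Sum>p<c. f p * (r \<cdot>\<^sub>v a) $ p) = r * (\<Sum>p<c. f p * (a::real vec) $ p)"
  by (simp add: sum_distrib_left algebra_simps)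

lemma gen_add:
  assumes g1: "gen_sys H A M l k B a1 b1 c1 d1 e1 \<rho>1" and g2: "gen_sys H A M l k B a2 b2 c2 d2 e2 \<rho>2"
  shows "gen_sys H A M l k B (a1+a2) (b1+b2) (c1+c2) (d1+d2) (e1+e2) (\<rho>1+\<rho>2)"
proof -
  define bs where "bs = sorted_list_of_set B"
  define m where "m = dim_row A"
  define c where "c = card B"
  have G1: "c1 \<in> carrier_vec c \<and> d1 \<in> carrier_vec m \<and>
      H $$ (l, l) * a1 + H $$ (k, l) * b1 + (\<Sum>p<c. H $$ (bs ! p, l) * c1 $ p)
        - (\<Sum>i<m. A $$ (i, l) * d1 $ i) - e1 = 0 \<and>
      H $$ (k, l) * a1 + H $$ (k, k) * b1 + (\<Sum>p<c. H $$ (bs ! p, k) * c1 $ p)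
        - (\<Sum>i<m. A $$ (i, k) * d1 $ i) = 0 \<and>
      (\<forall>q<c. H $$ (bs ! q, l) * a1 + H $$ (bs ! q, k) * b1
        + (\<Sum>p<c. H $$ (bs ! q, bs ! p) * c1 $ p)
        - (\<Sum>i<m. A $$ (i, bs ! q) * d1 $ i) = 0) \<and>
      (\<forall>i<m. A $$ (i, l) * a1 + A $$ (i, k) * b1
        + (\<Sum>p<c. A $$ (i, bs ! p) * c1 $ p)
        + (\<Sum>j<m. M $$ (i, j) * d1 $ j) = 0) \<and>
      a1 + e1 = \<rho>1" using g1 unfolding gen_sys_def Let_def bs_def m_def c_def by simp
  have G2: "c2 \<in> carrier_vec c \<and> d2 \<in> carrier_vec m \<and>
      H $$ (l, l) * a2 + H $$ (k, l) * b2 + (\<Sum>p<c. H $$ (bs ! p, l) * c2 $ p)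
        - (\<Sum>i<m. A $$ (i, l) * d2 $ i) - e2 = 0 \<and>
      H $$ (k, l) * a2 + H $$ (k, k) * b2 + (\<Sum>p<c. H $$ (bs ! p, k) * c2 $ p)
        - (\<Sum>i<m. A $$ (i, k) * d2 $ i) = 0 \<and>
      (\<forall>q<c. H $$ (bs ! q, l) * a2 + H $$ (bs ! q, k) * b2
        + (\<Sum>p<c. H $$ (bs ! q, bs ! p) * c2 $ p)
        - (\<Sum>i<m. A $$ (i, bs ! q) * d2 $ i) = 0) \<and>
      (\<forall>i<m. A $$ (i, l) * a2 + A $$ (i, k) * b2
        + (\<Sum>p<c. A $$ (i, bs ! p) * c2 $ p)
        + (\<Sum>j<m. M $$ (i, j) * d2 $ j) = 0) \<and>
      a2 + e2 = \<rho>2" using g2 unfolding gen_sys_def Let_def bs_def m_def c_def by simp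
  have c1: "c1 \<in> carrier_vec c" and d1: "d1 \<in> carrier_vec m"
    and c2: "c2 \<in> carrier_vec c" and d2: "d2 \<in> carrier_vec m" using G1 G2 by auto
  note sv = sum_vadd[OF c1 c2] sum_vadd[OF d1 d2]
  show ?thesis unfolding gen_sys_def Let_def bs_def[symmetric] m_def[symmetric] c_def[symmetric]
  proof (intro conjI allI impI)
    show "c1 + c2 \<in> carrier_vec c" using c1 c2 by simp
    show "d1 + d2 \<in> carrier_vec m" using d1 d2 by simp
    show "H $$ (l, l) * (a1+a2) + H $$ (k, l) * (b1+b2) + (\<Sum>p<c. H $$ (bs ! p, l) * (c1+c2) $ p)
        - (\<Sum>i<m. A $$ (i, l) * (d1+d2) $ i) - (e1+e2) = 0"
    proof -
      have "H $$ (l, l) * (a1+a2) + H $$ (k, l) * (b1+b2) + (\<Sum>p<c. H $$ (bs ! p, l) * (c1+c2) $ p)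
        - (\<Sum>i<m. A $$ (i, l) * (d1+d2) $ i) - (e1+e2) =
       (H $$ (l, l) * a1 + H $$ (k, l) * b1 + (\<Sum>p<c. H $$ (bs ! p, l) * c1 $ p)
        - (\<Sum>i<m. A $$ (i, l) * d1 $ i) - e1) + 
       (H $$ (l, l) * a2 + H $$ (k, l) * b2 + (\<Sum>p<c. H $$ (bs ! p, l) * c2 $ p)
        - (\<Sum>i<m. A $$ (i, l) * d2 $ i) - e2)" unfolding sv by (simp add: algebra_simps)
      thus ?thesis using G1 G2 by simp
    qed
    show "H $$ (k, l) * (a1+a2) + H $$ (k, k) * (b1+b2) + (\<Sum>p<c. H $$ (bs ! p, k) * (c1+c2) $ p)
        - (\<Sum>i<m. A $$ (i, k) * (d1+d2) $ i) = 0"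
    proof -
      have "H $$ (k, l) * (a1+a2) + H $$ (k, k) * (b1+b2) + (\<Sum>p<c. H $$ (bs ! p, k) * (c1+c2) $ p)
        - (\<Sum>i<m. A $$ (i, k) * (d1+d2) $ i) =
        (H $$ (k, l) * a1 + H $$ (k, k) * b1 + (\<Sum>p<c. H $$ (bs ! p, k) * c1 $ p)
        - (\<Sum>i<m. A $$ (i, k) * d1 $ i)) + (H $$ (k, l) * a2 + H $$ (k, k) * b2 + (\<Sum>p<c. H $$ (bs ! p, k) * c2 $ p)
        - (\<Sum>i<m. A $$ (i, k) * d2 $ i))" unfolding sv by (simp add: algebra_simps)
      thus ?thesis using G1 G2 by simp
    qed
    fix q assume q: "q < c"
    show "H $$ (bs ! q, l) * (a1+a2) + H $$ (bs ! q, k) * (b1+b2)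
        + (\<Sum>p<c. H $$ (bs ! q, bs ! p) * (c1+c2) $ p)
        - (\<Sum>i<m. A $$ (i, bs ! q) * (d1+d2) $ i) = 0"
    proof -
      have "H $$ (bs ! q, l) * (a1+a2) + H $$ (bs ! q, k) * (b1+b2)
        + (\<Sum>p<c. H $$ (bs ! q, bs ! p) * (c1+c2) $ p)
        - (\<Sum>i<m. A $$ (i, bs ! q) * (d1+d2) $ i) = 
        (H $$ (bs ! q, l) * a1 + H $$ (bs ! q, k) * b1
        + (\<Sum>p<c. H $$ (bs ! q, bs ! p) * c1 $ p)
        - (\<Sum>i<m. A $$ (i, bs ! q) * d1 $ i)) + (H $$ (bs ! q, l) * a2 + H $$ (bs ! q, k) * b2
        + (\<Sum>p<c. H $$ (bs ! q, bs ! p) * c2 $ p)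
        - (\<Sum>i<m. A $$ (i, bs ! q) * d2 $ i))" unfolding sv by (simp add: algebra_simps)
      thus ?thesis using G1 G2 q by simp
    qed
  next
    fix i assume i: "i < m"
    show "A $$ (i, l) * (a1+a2) + A $$ (i, k) * (b1+b2)
        + (\<Sum>p<c. A $$ (i, bs ! p) * (c1+c2) $ p)
        + (\<Sum>j<m. M $$ (i, j) * (d1+d2) $ j) = 0"
    proof -
      have "A $$ (i, l) * (a1+a2) + A $$ (i, k) * (b1+b2)
        + (\<Sum>p<c. A $$ (i, bs ! p) * (c1+c2) $ p)
        + (\<Sum>j<m. M $$ (i, j) * (d1+d2) $ j) = (A $$ (i, l) * a1 + A $$ (i, k) * b1
        + (\<Sum>p<c. A $$ (i, bs ! p) * c1 $ p)
        + (\<Sum>j<m. M $$ (i, j) * d1 $ j)) + (A $$ (i, l) * a2 + A $$ (i, k) * b2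
        + (\<Sum>p<c. A $$ (i, bs ! p) * c2 $ p)
        + (\<Sum>j<m. M $$ (i, j) * d2 $ j))" unfolding sv by (simp add: algebra_simps)
      thus ?thesis using G1 G2 i by simp
    qed
  next
    show "a1 + a2 + (e1 + e2) = \<rho>1 + \<rho>2" using G1 G2 by simp
  qed
qed



lemma gen_smult:
  assumes g1: "gen_sys H A M l k B a1 b1 c1 d1 e1 \<rho>1"
  shows "gen_sys H A M l k B (r*a1) (r*b1) (r \<cdot>\<^sub>v c1) (r \<cdot>\<^sub>v d1) (r*e1) (r*\<rho>1)"
proof -
  define bs where "bs = sorted_list_of_set B"
  define m where "m = dim_row A"
  define c where "c = card B"
  have G1: "c1 \<in> carrier_vec c \<and> d1 \<in> carrier_vec m \<and>
      H $$ (l, l) * a1 + H $$ (k, l) * b1 + (\<Sum>p<c. H $$ (bs ! p, l) * c1 $ p)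
        - (\<Sum>i<m. A $$ (i, l) * d1 $ i) - e1 = 0 \<and>
      H $$ (k, l) * a1 + H $$ (k, k) * b1 + (\<Sum>p<c. H $$ (bs ! p, k) * c1 $ p)
        - (\<Sum>i<m. A $$ (i, k) * d1 $ i) = 0 \<and>
      (\<forall>q<c. H $$ (bs ! q, l) * a1 + H $$ (bs ! q, k) * b1
        + (\<Sum>p<c. H $$ (bs ! q, bs ! p) * c1 $ p)
        - (\<Sum>i<m. A $$ (i, bs ! q) * d1 $ i) = 0) \<and>
      (\<forall>i<m. A $$ (i, l) * a1 + A $$ (i, k) * b1
        + (\<Sum>p<c. A $$ (i, bs ! p) * c1 $ p)
        + (\<Sum>j<m. M $$ (i, j) * d1 $ j) = 0) \<and>
      a1 + e1 = \<rho>1" using g1 unfolding gen_sys_def Let_def bs_def m_def c_def by simp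
  have c1: "c1 \<in> carrier_vec c" and d1: "d1 \<in> carrier_vec m" using G1 by auto
  note sv = sum_vsmult[OF c1] sum_vsmult[OF d1]
  show ?thesis unfolding gen_sys_def Let_def bs_def[symmetric] m_def[symmetric] c_def[symmetric]
  proof (intro conjI allI impI)
    show "r \<cdot>\<^sub>v c1 \<in> carrier_vec c" using c1 by simp
    show "r \<cdot>\<^sub>v d1 \<in> carrier_vec m" using d1 by simp
    show "H $$ (l, l) * (r*a1) + H $$ (k, l) * (r*b1) + (\<Sum>p<c. H $$ (bs ! p, l) * (r \<cdot>\<^sub>v c1) $ p)
        - (\<Sum>i<m. A $$ (i, l) * (r \<cdot>\<^sub>v d1) $ i) - (r*e1) = 0"
    proof -
      have "H $$ (l, l) * (r*a1) + H $$ (k, l) * (r*b1) + (\<Sum>p<c. H $$ (bs ! p, l) * (r \<cdot>\<^sub>v c1) $ p)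
        - (\<Sum>i<m. A $$ (i, l) * (r \<cdot>\<^sub>v d1) $ i) - (r*e1) =
       r * (H $$ (l, l) * a1 + H $$ (k, l) * b1 + (\<Sum>p<c. H $$ (bs ! p, l) * c1 $ p)
        - (\<Sum>i<m. A $$ (i, l) * d1 $ i) - e1)" unfolding sv by (simp add: algebra_simps)
      thus ?thesis using G1 by simp
    qed
    show "H $$ (k, l) * (r*a1) + H $$ (k, k) * (r*b1) + (\<Sum>p<c. H $$ (bs ! p, k) * (r \<cdot>\<^sub>v c1) $ p)
        - (\<Sum>i<m. A $$ (i, k) * (r \<cdot>\<^sub>v d1) $ i) = 0"
    proof -
      have "H $$ (k, l) * (r*a1) + H $$ (k, k) * (r*b1) + (\<Sum>p<c. H $$ (bs ! p, k) * (r \<cdot>\<^sub>v c1) $ p)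
        - (\<Sum>i<m. A $$ (i, k) * (r \<cdot>\<^sub>v d1) $ i) =
        r * (H $$ (k, l) * a1 + H $$ (k, k) * b1 + (\<Sum>p<c. H $$ (bs ! p, k) * c1 $ p)
        - (\<Sum>i<m. A $$ (i, k) * d1 $ i))" unfolding sv by (simp add: algebra_simps)
      thus ?thesis using G1 by simp
    qed
    fix q assume q: "q < c"
    show "H $$ (bs ! q, l) * (r*a1) + H $$ (bs ! q, k) * (r*b1)
        + (\<Sum>p<c. H $$ (bs ! q, bs ! p) * (r \<cdot>\<^sub>v c1) $ p)
        - (\<Sum>i<m. A $$ (i, bs ! q) * (r \<cdot>\<^sub>v d1) $ i) = 0"
    proof -
      have "H $$ (bs ! q, l) * (r*a1) + H $$ (bs ! q, k) * (r*b1)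
        + (\<Sum>p<c. H $$ (bs ! q, bs ! p) * (r \<cdot>\<^sub>v c1) $ p)
        - (\<Sum>i<m. A $$ (i, bs ! q) * (r \<cdot>\<^sub>v d1) $ i) = 
        r * (H $$ (bs ! q, l) * a1 + H $$ (bs ! q, k) * b1
        + (\<Sum>p<c. H $$ (bs ! q, bs ! p) * c1 $ p)
        - (\<Sum>i<m. A $$ (i, bs ! q) * d1 $ i))" unfolding sv by (simp add: algebra_simps)
      thus ?thesis using G1 q by simp
    qed
  next
    fix i assume i: "i < m"
    show "A $$ (i, l) * (r*a1) + A $$ (i, k) * (r*b1)
        + (\<Sum>p<c. A $$ (i, bs ! p) * (r \<cdot>\<^sub>v c1) $ p)
        + (\<Sum>j<m. M $$ (i, j) * (r \<cdot>\<^sub>v d1) $ j) = 0"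
    proof -
      have "A $$ (i, l) * (r*a1) + A $$ (i, k) * (r*b1)
        + (\<Sum>p<c. A $$ (i, bs ! p) * (r \<cdot>\<^sub>v c1) $ p)
        + (\<Sum>j<m. M $$ (i, j) * (r \<cdot>\<^sub>v d1) $ j) = r * (A $$ (i, l) * a1 + A $$ (i, k) * b1
        + (\<Sum>p<c. A $$ (i, bs ! p) * c1 $ p)
        + (\<Sum>j<m. M $$ (i, j) * d1 $ j))" unfolding sv by (simp add: algebra_simps)
      thus ?thesis using G1 i by simp
    qed
  next
    have "a1 + e1 = \<rho>1" using G1 by simp
    thus "r * a1 + r * e1 = r * \<rho>1" by (metis distrib_left)
  qed
qed

lemma vec_add_self_zero:
  assumes "a \<in> carrier_vec c" "w \<in> carrier_vec c" "a + w = (a :: real vec)"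
  shows "w = 0\<^sub>v c"
proof (rule eq_vecI)
  show "dim_vec w = dim_vec (0\<^sub>v c)" using assms by simp
  fix i assume "i < dim_vec (0\<^sub>v c)"
  hence i: "i < c" by simp
  have "(a + w) $ i = a $ i + w $ i" using assms(1,2) i by simp
  hence "a $ i + w $ i = a $ i" unfolding assms(3) by simp
  thus "w $ i = 0\<^sub>v c $ i" using assms i by simp
qed

lemma U1:
  assumes uniq: "\<exists>!(dxl, dxk, dxB, dy, dzl). step_system H A M l k B dxl dxk dxB dy dzl"
    and g: "gen_sys H A M l k B a b w y z 0"
  shows "a = 0 \<and> b = 0 \<and> w = 0\<^sub>v (card B) \<and> y = 0\<^sub>v (dim_row A) \<and> z = 0"
proof -
  define P where "P = (\<lambda>(dxl, dxk, dxB, dy, dzl). step_system H A M l k B dxl dxk dxB dy dzl)"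
  have "\<exists>!t. P t" using uniq unfolding P_def .
  then obtain t where Pt0: "P t" and un: "\<And>t'. P t' \<Longrightarrow> t' = t" by (metis ex1E)
  obtain a0 b0 w0 y0 z0 where t: "t = (a0, b0, w0, y0, z0)" by (cases t) auto
  have s0: "gen_sys H A M l k B a0 b0 w0 y0 z0 1" using Pt0 t step_gen unfolding P_def by simp
  have s1: "gen_sys H A M l k B (a0+a) (b0+b) (w0+w) (y0+y) (z0+z) (1+0)" by (rule gen_add[OF s0 g])
  have "(a0+a, b0+b, w0+w, y0+y, z0+z) = t" by (rule un) (use s1 step_gen in \<open>simp add: P_def\<close>)
  hence e: "a0+a = a0" "b0+b = b0" "w0+w = w0" "y0+y = y0" "z0+z = z0" using t by auto
  have cw: "w0 \<in> carrier_vec (card B)" "w \<in> carrier_vec (card B)"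
    and cy: "y0 \<in> carrier_vec (dim_row A)" "y \<in> carrier_vec (dim_row A)"
    using s0 g unfolding gen_sys_def Let_def by auto
  show ?thesis using e vec_add_self_zero[OF cw e(3)] vec_add_self_zero[OF cy e(4)] by simp
qed

lemma U2:
  assumes nz: "\<forall>dxl dxk dxB dy dzl. step_system H A M l k B dxl dxk dxB dy dzl \<longrightarrow> dxk \<noteq> 0"
    and g: "gen_sys H A M l k B a 0 w y z \<rho>"
  shows "\<rho> = 0"
proof (rule ccontr)
  assume r: "\<rho> \<noteq> 0"
  have "gen_sys H A M l k B ((1/\<rho>)*a) ((1/\<rho>)*0) ((1/\<rho>) \<cdot>\<^sub>v w) ((1/\<rho>) \<cdot>\<^sub>v y) ((1/\<rho>)*z) ((1/\<rho>)*\<rho>)"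
    by (rule gen_smult[OF g])
  hence "step_system H A M l k B ((1/\<rho>)*a) 0 ((1/\<rho>) \<cdot>\<^sub>v w) ((1/\<rho>) \<cdot>\<^sub>v y) ((1/\<rho>)*z)"
    using r step_gen by simp
  thus False using nz by blast
qed


lemma pair_lemma:
  fixes \<alpha> \<beta> y d e :: "nat \<Rightarrow> real" and \<gamma> \<mu> :: "nat \<Rightarrow> nat \<Rightarrow> real" and a b :: real
  assumes E: "\<forall>i<m. \<alpha> i * a + \<beta> i * b + (\<Sum>p<c. \<gamma> i p * d p) + (\<Sum>j<m. \<mu> i j * e j) = 0"
    and ya: "(\<Sum>i<m. y i * \<alpha> i) = 0" and yg: "\<forall>p<c. (\<Sum>i<m. y i * \<gamma> i p) = 0"
    and ym: "\<forall>j<m. (\<Sum>i<m. y i * \<mu> i j) = 0"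
  shows "b * (\<Sum>i<m. y i * \<beta> i) = 0"
proof -
  have "0 = (\<Sum>i<m. y i * (\<alpha> i * a + \<beta> i * b + (\<Sum>p<c. \<gamma> i p * d p) + (\<Sum>j<m. \<mu> i j * e j)))"
    using E by simp
  also have "\<dots> = a * (\<Sum>i<m. y i * \<alpha> i) + b * (\<Sum>i<m. y i * \<beta> i)
      + (\<Sum>i<m. \<Sum>p<c. y i * \<gamma> i p * d p) + (\<Sum>i<m. \<Sum>j<m. y i * \<mu> i j * e j)"
    by (simp add: distrib_left sum.distrib sum_distrib_left algebra_simps)
  also have "(\<Sum>i<m. \<Sum>p<c. y i * \<gamma> i p * d p) = (\<Sum>p<c. \<Sum>i<m. y i * \<gamma> i p * d p)"
    by (rule sum.swap)
  also have "\<dots> = (\<Sum>p<c. (\<Sum>i<m. y i * \<gamma> i p) * d p)" by (simp add: sum_distrib_right)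
  also have "\<dots> = 0" using yg by simp
  also have "(\<Sum>i<m. \<Sum>j<m. y i * \<mu> i j * e j) = (\<Sum>j<m. \<Sum>i<m. y i * \<mu> i j * e j)"
    by (rule sum.swap)
  also have "\<dots> = (\<Sum>j<m. (\<Sum>i<m. y i * \<mu> i j) * e j)" by (simp add: sum_distrib_right)
  also have "\<dots> = 0" using ym by simp
  finally show ?thesis using ya by simp
qed

lemma sum_vec_idx[simp]: "(\<Sum>p<c. f p * vec c g $ p) = (\<Sum>p<c. f p * g p :: real)"
  by (rule sum.cong) auto

lemma sum_zero_idx[simp]: "(\<Sum>p<c. f p * (0\<^sub>v c) $ p) = (0::real)"
  by (rule sum.neutral) auto


theorem proposition9:
  fixes H M A :: "real mat" and n m l k :: nat and B :: "nat set"
  assumes "H \<in> carrier_mat n n" and "transpose_mat H = H" and "psd_mat H"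
    and "M \<in> carrier_mat m m" and "transpose_mat M = M" and "psd_mat M"
    and "A \<in> carrier_mat m n"
    and "l < n" and "k < n" and "l \<noteq> k"
    and "B \<subseteq> {0..<n} - {l, k}"
    and "\<exists>!(dxl, dxk, dxB, dy, dzl). step_system H A M l k B dxl dxk dxB dy dzl"
    and "\<forall>dxl dxk dxB dy dzl. step_system H A M l k B dxl dxk dxB dy dzl \<longrightarrow> dxk \<noteq> 0"
  shows "det (kkt_mat H A M l B) \<noteq> 0 \<and> det (kkt_mat H A M k B) \<noteq> 0"
proof -
  note H = assms(1) and Hs = assms(2) and Hp = assms(3) and M = assms(4) and Ms = assms(5)
    and Mp = assms(6) and A = assms(7) and l = assms(8) and k = assms(9)
    and uniq = assms(12) and nz = assms(13)
  have B': "B \<subseteq> {0..<n}" using assms(11) by blast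
  define bs where "bs = sorted_list_of_set B"
  define c where "c = card B"
  have mA: "dim_row A = m" using A by simp
  have fin: "finite B" using B' finite_subset by blast
  have len: "length bs = c" using bs_def c_def fin by simp
  have bsn: "bs!p < n" if "p < c" for p
  proof -
    have "bs!p \<in> B" using that len bs_def fin by (metis nth_mem set_sorted_list_of_set)
    thus ?thesis using B' by auto
  qed
  have Hsym: "H$$(a,b) = H$$(b,a)" if "a < n" "b < n" for a b
  proof -
    have "transpose_mat H $$ (a,b) = H $$ (b,a)" using that H by simp
    thus ?thesis using Hs by simp
  qed
  have Msym: "M$$(a,b) = M$$(b,a)" if "a < m" "b < m" for a b
  proof -
    have "transpose_mat M $$ (a,b) = M $$ (b,a)" using that M by simp
    thus ?thesis using Ms by simp
  qed
  have symsum: "(\<Sum>p<c. H$$(bs!p,r) * f p) = (\<Sum>p<c. H$$(r,bs!p) * f p)" if r: "r < n" for r f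
    by (intro sum.cong refl) (simp add: Hsym[OF bsn r])
  have Kdim: "kkt_mat H A M j B \<in> carrier_mat (1 + c + m) (1 + c + m)" for j
    using kkt_dims[of H A M j B] mA c_def by simp
  from uniq obtain a0 b0 w0 y0 z0 where s0: "step_system H A M l k B a0 b0 w0 y0 z0"
    by (metis (no_types, lifting) case_prodE ex1E)
  have b0: "b0 \<noteq> 0" using nz s0 by blast
  have w0: "w0 \<in> carrier_vec c" and E4: "\<forall>i<m. A $$ (i, l) * a0 + A $$ (i, k) * b0
        + (\<Sum>p<c. A $$ (i, bs ! p) * w0 $ p)
        + (\<Sum>j<m. M $$ (i, j) * y0 $ j) = 0"
    using s0 unfolding step_system_def Let_def bs_def[symmetric] c_def[symmetric] mA by auto
  have vzero: "v = 0\<^sub>v (1 + c + m)"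
    if v: "v \<in> carrier_vec (1 + c + m)" and u: "v$0 = 0" and w: "vec c (\<lambda>p. v$(Suc p)) = 0\<^sub>v c"
      and y: "vec m (\<lambda>i. v$(Suc (c+i))) = 0\<^sub>v m" for v
  proof (rule eq_vecI)
    show "dim_vec v = dim_vec (0\<^sub>v (1 + c + m))" using v by simp
    fix s assume "s < dim_vec (0\<^sub>v (1 + c + m))"
    hence s: "s < 1 + c + m" by simp
    show "v $ s = 0\<^sub>v (1 + c + m) $ s"
    proof (cases s)
      case 0 thus ?thesis using u s by simp
    next
      case (Suc s')
      show ?thesis
      proof (cases "s' < c")
        case True
        have "vec c (\<lambda>p. v$(Suc p)) $ s' = 0" using w True by simp
        thus ?thesis using True Suc s by simp
      next
        case False
        define i where "i = s' - c"
        have i: "i < m" "s' = c + i" using False s Suc i_def by auto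
        have "vec m (\<lambda>i. v$(Suc (c+i))) $ i = 0" using y i by simp
        thus ?thesis using i Suc s by simp
      qed
    qed
  qed
  have Kl: "det (kkt_mat H A M l B) \<noteq> 0"
  proof
    assume "det (kkt_mat H A M l B) = 0"
    then obtain v where v: "v \<in> carrier_vec (1 + c + m)" and vnz: "v \<noteq> 0\<^sub>v (1 + c + m)"
      and ker: "kkt_mat H A M l B *\<^sub>v v = 0\<^sub>v (1 + c + m)"
      using det_0_iff_vec_prod_zero[OF Kdim] by auto
    note F = kernel_facts[OF H Hs Hp M Ms Mp A l B' bs_def c_def v ker]
    define u where "u = v$0"
    define w where "w = vec c (\<lambda>p. v$(Suc p))"
    define y where "y = vec m (\<lambda>i. v$(Suc (c+i)))"
    have gu: "gen_sys H A M l k B u 0 w (0\<^sub>v m) 0 u"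
      unfolding gen_sys_def Let_def bs_def[symmetric] c_def[symmetric] mA
      using F(1) F(2) l k bsn unfolding u_def w_def
      by (auto simp: symsum)
    have u0: "u = 0" using U2[OF nz gu] .
    have "w = 0\<^sub>v c" using U1[OF uniq gu[unfolded u0]] c_def by simp
    have tk: "(\<Sum>i<m. A$$(i,k) * v$(Suc (c+i))) = 0"
    proof -
      have "b0 * (\<Sum>i<m. v$(Suc (c+i)) * A$$(i,k)) = 0"
      proof (rule pair_lemma[OF E4])
        show "(\<Sum>i<m. v$(Suc (c+i)) * A$$(i,l)) = 0" using F(4) by (simp add: mult.commute)
        show "\<forall>p<c. (\<Sum>i<m. v$(Suc (c+i)) * A$$(i,bs!p)) = 0" using F(5) by (simp add: mult.commute)
        show "\<forall>j<m. (\<Sum>i<m. v$(Suc (c+i)) * M$$(i,j)) = 0"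
        proof (intro allI impI)
          fix j assume j: "j < m"
          have "(\<Sum>i<m. v$(Suc (c+i)) * M$$(i,j)) = (\<Sum>i<m. M$$(j,i) * v$(Suc (c+i)))"
            by (intro sum.cong refl) (simp add: Msym[OF _ j] mult.commute)
          thus "(\<Sum>i<m. v$(Suc (c+i)) * M$$(i,j)) = 0" using F(3) j by simp
        qed
      qed
      thus ?thesis using b0 by (simp add: mult.commute)
    qed
    have gy: "gen_sys H A M l k B 0 0 (0\<^sub>v c) y 0 0"
      unfolding gen_sys_def Let_def bs_def[symmetric] c_def[symmetric] mA
      using F(3) F(4) F(5) tk unfolding y_def
      by auto
    have "y = 0\<^sub>v m" using U1[OF uniq gy] mA by simp
    hence "v = 0\<^sub>v (1 + c + m)" using vzero[OF v] u0 \<open>w = 0\<^sub>v c\<close> unfolding u_def w_def y_def by simp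
    thus False using vnz by simp
  qed
  have Kk: "det (kkt_mat H A M k B) \<noteq> 0"
  proof
    assume "det (kkt_mat H A M k B) = 0"
    then obtain v where v: "v \<in> carrier_vec (1 + c + m)" and vnz: "v \<noteq> 0\<^sub>v (1 + c + m)"
      and ker: "kkt_mat H A M k B *\<^sub>v v = 0\<^sub>v (1 + c + m)"
      using det_0_iff_vec_prod_zero[OF Kdim] by auto
    note F = kernel_facts[OF H Hs Hp M Ms Mp A k B' bs_def c_def v ker]
    define u where "u = v$0"
    define w where "w = vec c (\<lambda>p. v$(Suc p))"
    define y where "y = vec m (\<lambda>i. v$(Suc (c+i)))"
    have Hkl: "H$$(k,l) = H$$(l,k)" using Hsym[OF k l] .
    have gu: "gen_sys H A M l k B 0 u w (0\<^sub>v m) 0 0"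
      unfolding gen_sys_def Let_def bs_def[symmetric] c_def[symmetric] mA
      using F(1) F(2) l k bsn unfolding u_def w_def
      by (auto simp: symsum Hkl)
    have u0: "u = 0" and w0: "w = 0\<^sub>v c" using U1[OF uniq gu] c_def by simp_all
    define \<tau> where "\<tau> = - (\<Sum>i<m. A$$(i,l) * v$(Suc (c+i)))"
    have gy: "gen_sys H A M l k B 0 0 (0\<^sub>v c) y \<tau> \<tau>"
      unfolding gen_sys_def Let_def bs_def[symmetric] c_def[symmetric] mA
      using F(3) F(4) F(5) unfolding y_def \<tau>_def
      by auto
    have t0: "\<tau> = 0" using U2[OF nz gy] .
    have "y = 0\<^sub>v m" using U1[OF uniq gy[unfolded t0]] mA by simp
    hence "v = 0\<^sub>v (1 + c + m)" using vzero[OF v] u0 w0 unfolding u_def w_def y_def by simp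
    thus False using vnz by simp
  qed
  show ?thesis using Kl Kk by simp
qed

end
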